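(* Let $\ell$ be a generic length vector of length $n\ge4$ having a nonempty gee, and let $m=n-3$. Then there is no subset $S\subset[\![m+2]\!]$ such that for every $I\subset[\![m+2]\!]$ with $|I|\le m$, $$\phi(R^{m-|I|}V_I)=\begin{cases}1&I\subset S,\\0&\text{otherwise.}\end{cases}$$
   Context: A generic length vector $\ell=(\ell_1,\ldots,\ell_n)$: positive reals, $\ell_1\le\cdots\le\ell_n<\ell_1+\cdots+\ell_{n-1}$, with no $S\subset[\![n]\!]=\{1,\ldots,n\}$ having $\sum_{i\in S}\ell_i=\sum_{i\notin S}\ell_i$. $\overline{M}(\ell)=\{(z_1,\ldots,z_n)\in(S^1)^n:\sum\ell_iz_i=0\}/O(2)$, a closed connected $m$-manifold. $S\subset[\![n]\!]$ is short if $\sum_{i\in S}\ell_i<\sum_{i\notin S}\ell_i$; a subgee is $S\subset[\![n-1]\!]$ with $S\cup\{n\}$ short; gees are the maximal subgees. Cohomology has $\mathbb{Z}_2$ coefficients. By Hausmann–Knudsen, $H^*(\overline{M}(\ell))$ is generated by $R,V_1,\ldots,V_{n-1}\in H^1$ subject only to: (i) monomials of the same degree divisible by exactly the same set of $V_i$'s are equal; with $V_I=\prod_{i\in I}V_i$, the classes $R^{d-|I|}V_I$ span $H^d$; (ii) $V_I=0$ unless $I$ is a subgee; (iii) for each subgee $S$ with $|S|\ge n-2-d$, $\sum_{T}R^{d-|T|}V_T=0$ in $H^d$, summed over $T\subset[\![n-1]\!]$, $|T|\le d$, $T\cap S=\emptyset$. $\phi:H^m(\overline{M}(\ell))\to\mathbb{Z}_2$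 is the isomorphism (evaluation on the fundamental class). *)

theory Defs
  imports Complex_Main
begin

text \<open>Length vectors are functions l :: nat => real, only the values l 1, ..., l n matter.
  The index set [[n]] is {1..n}.\<close>

definition generic_length :: "(nat \<Rightarrow> real) \<Rightarrow> nat \<Rightarrow> bool" where
  "generic_length l n \<longleftrightarrow>
     (\<forall>i\<in>{1..n}. 0 < l i) \<and>
     (\<forall>i j. 1 \<le> i \<longrightarrow> i \<le> j \<longrightarrow> j \<le> n \<longrightarrow> l i \<le> l j) \<and>
     l n < (\<Sum>i\<in>{1..n-1}. l i) \<and>
     (\<forall>S. S \<subseteq> {1..n} \<longrightarrow> (\<Sum>i\<in>S. l i) \<noteq> (\<Sum>i\<in>{1..n} - S. l i))"

definition short :: "(nat \<Rightarrow> real) \<Rightarrow> nat \<Rightarrow> nat set \<Rightarrow> bool" where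
  "short l n S \<longleftrightarrow> (\<Sum>i\<in>S. l i) < (\<Sum>i\<in>{1..n} - S. l i)"

definition subgee :: "(nat \<Rightarrow> real) \<Rightarrow> nat \<Rightarrow> nat set \<Rightarrow> bool" where
  "subgee l n S \<longleftrightarrow> S \<subseteq> {1..n-1} \<and> short l n (insert n S)"

definition gee :: "(nat \<Rightarrow> real) \<Rightarrow> nat \<Rightarrow> nat set \<Rightarrow> bool" where
  "gee l n G \<longleftrightarrow> subgee l n G \<and> (\<forall>S. subgee l n S \<longrightarrow> G \<subseteq> S \<longrightarrow> S = G)"

text \<open>Degree-d part of the Hausmann--Knudsen presentation. A vector of the free Z2-vector
  space on the monomial symbols R^(d-|I|) V_I (I a subset of [[n-1]], |I| <= d) is encoded as
  the (finite) set of those I having coefficient 1; addition is symmetric difference.\<close>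

definition mons :: "nat \<Rightarrow> nat \<Rightarrow> nat set set" where
  "mons n d = {I. I \<subseteq> {1..n-1} \<and> card I \<le> d}"

text \<open>Relations (ii) and (iii) in degree d.\<close>
definition HK_rels :: "(nat \<Rightarrow> real) \<Rightarrow> nat \<Rightarrow> nat \<Rightarrow> nat set set set" where
  "HK_rels l n d =
     {{I} | I. I \<in> mons n d \<and> \<not> subgee l n I} \<union>
     {{T \<in> mons n d. T \<inter> S = {}} | S. subgee l n S \<and> n \<le> card S + 2 + d}"

definition zsum :: "nat set set set \<Rightarrow> nat set set" where
  "zsum F = {I. odd (card {v \<in> F. I \<in> v})}"

definition HK_span :: "(nat \<Rightarrow> real) \<Rightarrow> nat \<Rightarrow> nat \<Rightarrow> nat set set set" where
  "HK_span l n d = {zsum F | F. finite F \<and> F \<subseteq> HK_rels l n d}"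

text \<open>phi(R^(m-|I|) V_I) for m = n - 3: the top class H^m is Z2, and phi is the
  isomorphism to Z2, so the value is 1 iff the class is nonzero, i.e. iff the symbol {I}
  is not in the span of the relations.\<close>
definition HK_phi :: "(nat \<Rightarrow> real) \<Rightarrow> nat \<Rightarrow> nat set \<Rightarrow> nat" where
  "HK_phi l n I = (if {I} \<notin> HK_span l n (n - 3) then 1 else 0)"

end

theory Submission
  imports Defs
begin

lemma zsum_single: "zsum {v} = v"
proof -
  have "\<And>I. card {w \<in> {v}. I \<in> w} = (if I \<in> v then 1 else 0)"
    by (auto simp: Collect_conv_if)
  then show ?thesis unfolding zsum_def by auto
qed

lemma odd_card_symdiff:
  assumes "finite A" "finite B"
  shows "odd (card ((A-B) \<union> (B-A))) \<longleftrightarrow> (odd (card A) \<noteq> odd (card B))"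
proof -
  have 1: "card ((A-B) \<union> (B-A)) = card (A-B) + card (B-A)"
    using assms by (intro card_Un_disjoint) auto
  have 2: "card A = card (A-B) + card (A \<inter> B)"
    using assms by (metis Int_commute Un_Diff_Int card_Un_disjoint Diff_Int_distrib2 Diff_disjoint finite_Diff finite_Int inf_bot_left Int_Diff Int_assoc)
  have 3: "card B = card (B-A) + card (A \<inter> B)"
    using assms by (metis Int_commute Un_Diff_Int card_Un_disjoint Diff_Int_distrib2 Diff_disjoint finite_Diff finite_Int inf_bot_left Int_Diff Int_assoc)
  show ?thesis using 1 2 3 by auto
qed

lemma zsum_symdiff:
  assumes "finite F" "finite F'"
  shows "zsum ((F-F') \<union> (F'-F)) = (zsum F - zsum F') \<union> (zsum F' - zsum F)"
proof -
  have "\<And>I. {v \<in> (F-F') \<union> (F'-F). I \<in> v} = ({v\<in>F. I\<in>v} - {v\<in>F'. I\<in>v}) \<union> ({v\<in>F'. I\<in>v} - {v\<in>F. I\<in>v})"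
    by auto
  moreover have "\<And>I. odd (card (({v\<in>F. I\<in>v} - {v\<in>F'. I\<in>v}) \<union> ({v\<in>F'. I\<in>v} - {v\<in>F. I\<in>v})))
     \<longleftrightarrow> (odd (card {v\<in>F. I\<in>v}) \<noteq> odd (card {v\<in>F'. I\<in>v}))"
    using assms by (intro odd_card_symdiff) auto
  ultimately show ?thesis unfolding zsum_def by auto
qed

lemma span_add:
  assumes "x \<in> HK_span l n d" "y \<in> HK_span l n d"
  shows "(x-y) \<union> (y-x) \<in> HK_span l n d"
proof -
  obtain F where F: "finite F" "F \<subseteq> HK_rels l n d" "x = zsum F" using assms(1) unfolding HK_span_def by auto
  obtain F' where F': "finite F'" "F' \<subseteq> HK_rels l n d" "y = zsum F'" using assms(2) unfolding HK_span_def by auto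
  have "(x-y) \<union> (y-x) = zsum ((F-F') \<union> (F'-F))" using zsum_symdiff F F' by simp
  moreover have "finite ((F-F') \<union> (F'-F))" "(F-F') \<union> (F'-F) \<subseteq> HK_rels l n d" using F F' by auto
  ultimately show ?thesis unfolding HK_span_def by blast
qed

lemma span_rel: "r \<in> HK_rels l n d \<Longrightarrow> r \<in> HK_span l n d"
  unfolding HK_span_def using zsum_single[of r] by (metis (mono_tags, lifting) empty_subsetI finite.emptyI finite.insertI insert_subset mem_Collect_eq)

lemma span_empty: "{} \<in> HK_span l n d"
proof -
  have "zsum {} = {}" unfolding zsum_def by simp
  then show ?thesis unfolding HK_span_def by blast
qed

lemma span_units:
  assumes "finite X" "\<forall>T\<in>X. {T} \<in> HK_span l n d"
  shows "X \<in> HK_span l n d"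
  using assms
proof (induction X rule: finite_induct)
  case empty show ?case by (rule span_empty)
next
  case (insert x X)
  then have "(X - {x}) \<union> ({x} - X) \<in> HK_span l n d" by (intro span_add) auto
  moreover have "(X - {x}) \<union> ({x} - X) = insert x X" using insert by auto
  ultimately show ?case by simp
qed

lemma subgee_mono:
  assumes "generic_length l n" "n \<ge> 1" "subgee l n A" "B \<subseteq> A"
  shows "subgee l n B"
proof -
  have pos: "\<forall>i\<in>{1..n}. 0 < l i" using assms(1) unfolding generic_length_def by auto
  have A: "A \<subseteq> {1..n-1}" using assms(3) unfolding subgee_def by auto
  have "{1..n-1} \<subseteq> {1..n}" by auto
  then have "A \<subseteq> {1..n}" using A by (meson order_trans)
  then have iA: "insert n A \<subseteq> {1..n}" using assms(2) by auto
  have s1: "sum l (insert n B) \<le> sum l (insert n A)"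
    apply (rule sum_mono2) using iA pos assms(4) finite_subset[OF iA] by (auto intro: less_imp_le)
  have s2: "sum l ({1..n} - insert n A) \<le> sum l ({1..n} - insert n B)"
    apply (rule sum_mono2) using pos assms(4) by (auto intro: less_imp_le)
  have "short l n (insert n A)" using assms(3) unfolding subgee_def by auto
  then have "short l n (insert n B)" using s1 s2 unfolding short_def by linarith
  then show ?thesis using A assms(4) unfolding subgee_def by auto
qed


theorem lemma2p1:
  fixes l :: "nat \<Rightarrow> real" and n m :: nat
  assumes "generic_length l n" and "n \<ge> 4"
    and "\<exists>G. gee l n G \<and> G \<noteq> {}"
    and "m = n - 3"
  shows "\<not> (\<exists>S. S \<subseteq> {1..m+2} \<and>
            (\<forall>I. I \<subseteq> {1..m+2} \<longrightarrow> card I \<le> m \<longrightarrow>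
                 HK_phi l n I = (if I \<subseteq> S then 1 else 0)))"
proof
  assume "\<exists>S. S \<subseteq> {1..m+2} \<and>
            (\<forall>I. I \<subseteq> {1..m+2} \<longrightarrow> card I \<le> m \<longrightarrow>
                 HK_phi l n I = (if I \<subseteq> S then 1 else 0))"
  then obtain S where S: "S \<subseteq> {1..m+2}" and H: "\<forall>I. I \<subseteq> {1..m+2} \<longrightarrow> card I \<le> m \<longrightarrow>
                 HK_phi l n I = (if I \<subseteq> S then 1 else 0)" by blast
  have m3: "n - 3 = m" using assms(4) by simp
  have nm: "{1..m+2} = {1..n-1}" using assms(2,4) by auto
  have Sn: "S \<subseteq> {1..n-1}" using S nm by simp
  have gl: "generic_length l n" by (rule assms(1))
  have pos: "\<forall>i\<in>{1..n}. 0 < l i" using gl unfolding generic_length_def by auto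
  have lmono: "\<And>i j. 1 \<le> i \<Longrightarrow> i \<le> j \<Longrightarrow> j \<le> n \<Longrightarrow> l i \<le> l j" using gl unfolding generic_length_def by auto
  have n1: "n \<ge> 1" using assms(2) by simp
  define V where "V = HK_span l n m"
  have key: "\<And>I. I \<subseteq> {1..n-1} \<Longrightarrow> card I \<le> m \<Longrightarrow> ({I} \<in> V \<longleftrightarrow> \<not> I \<subseteq> S)"
  proof -
    fix I assume "I \<subseteq> {1..n-1}" "card I \<le> m"
    then have "HK_phi l n I = (if I \<subseteq> S then 1 else 0)" using H nm by auto
    then show "{I} \<in> V \<longleftrightarrow> \<not> I \<subseteq> S" unfolding HK_phi_def V_def m3 by (auto split: if_splits)
  qed
  have subS: "\<And>I. I \<subseteq> S \<Longrightarrow> card I \<le> m \<Longrightarrow> subgee l n I"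
  proof (rule ccontr)
    fix I assume I: "I \<subseteq> S" "card I \<le> m" "\<not> subgee l n I"
    then have "I \<in> mons n m" using Sn unfolding mons_def by auto
    then have "{I} \<in> HK_rels l n m" using I unfolding HK_rels_def by blast
    then have "{I} \<in> V" unfolding V_def by (rule span_rel)
    then show False using key[of I] I Sn by auto
  qed
  have finmons: "finite (mons n m)"
  proof -
    have "mons n m \<subseteq> Pow {1..n-1}" unfolding mons_def by auto
    then show ?thesis by (rule finite_subset) simp
  qed
  show False
  proof (cases "card S \<le> m")
    case True
    define D where "D A B = {T \<in> mons n m. T \<subseteq> S \<and> A \<subseteq> T \<and> T \<inter> B = {}}" for A B
    have restrict: "\<And>v. v \<in> V \<Longrightarrow> v \<subseteq> mons n m \<Longrightarrow> {T \<in> v. T \<subseteq> S} \<in> V"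
    proof -
      fix v assume v: "v \<in> V" "v \<subseteq> mons n m"
      have "v - {T\<in>v. T \<subseteq> S} \<in> V" unfolding V_def
      proof (rule span_units)
        show "finite (v - {T\<in>v. T \<subseteq> S})" using v finmons finite_subset by blast
        show "\<forall>T\<in>v - {T \<in> v. T \<subseteq> S}. {T} \<in> HK_span l n m"
        proof
          fix T assume T: "T \<in> v - {T \<in> v. T \<subseteq> S}"
          then have "T \<in> mons n m" using v by auto
          then show "{T} \<in> HK_span l n m" using key[of T] T unfolding mons_def V_def by auto
        qed
      qed
      from span_add[OF v(1)[unfolded V_def] this[unfolded V_def]]
      have "(v - (v - {T\<in>v. T \<subseteq> S})) \<union> ((v - {T\<in>v. T \<subseteq> S}) - v) \<in> V" unfolding V_def .
      moreover have "(v - (v - {T\<in>v. T \<subseteq> S})) \<union> ((v - {T\<in>v. T \<subseteq> S}) - v) = {T\<in>v. T \<subseteq> S}" by auto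
      ultimately show "{T \<in> v. T \<subseteq> S} \<in> V" by simp
    qed
    have Dlem: "finite A \<Longrightarrow> \<forall>B. finite B \<longrightarrow> B \<noteq> {} \<longrightarrow> A \<inter> B = {} \<longrightarrow> subgee l n (A \<union> B) \<longrightarrow> D A B \<in> V" for A
    proof (induction A rule: finite_induct)
      case empty
      show ?case
      proof (intro allI impI)
        fix B :: "nat set" assume B: "finite B" "B \<noteq> {}" "{} \<inter> B = {}" "subgee l n ({} \<union> B)"
        have "card B \<ge> 1" using B by (simp add: Suc_leI card_gt_0_iff)
        then have "n \<le> card B + 2 + m" using assms(2,4) by simp
        then have "{T \<in> mons n m. T \<inter> B = {}} \<in> HK_rels l n m" using B unfolding HK_rels_def by auto
        then have "{T \<in> mons n m. T \<inter> B = {}} \<in> V" unfolding V_def by (rule span_rel)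
        from restrict[OF this] have "{T \<in> {T \<in> mons n m. T \<inter> B = {}}. T \<subseteq> S} \<in> V" by auto
        moreover have "{T \<in> {T \<in> mons n m. T \<inter> B = {}}. T \<subseteq> S} = D {} B" unfolding D_def by auto
        ultimately show "D {} B \<in> V" by simp
      qed
    next
      case (insert a A)
      show ?case
      proof (intro allI impI)
        fix B :: "nat set" assume B: "finite B" "B \<noteq> {}" "insert a A \<inter> B = {}" "subgee l n (insert a A \<union> B)"
        have s1: "subgee l n (A \<union> B)" by (rule subgee_mono[OF gl n1 B(4)]) auto
        have s2: "subgee l n (A \<union> insert a B)" using B(4) by simp
        have d1: "D A B \<in> V" using insert.IH B s1 by auto
        have d2: "D A (insert a B) \<in> V" using insert.IH insert.hyps B s2 by auto
        have "(D A B - D A (insert a B)) \<union> (D A (insert a B) - D A B) \<in> V"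
          using span_add d1 d2 unfolding V_def by blast
        moreover have "(D A B - D A (insert a B)) \<union> (D A (insert a B) - D A B) = D (insert a A) B"
          unfolding D_def by auto
        ultimately show "D (insert a A) B \<in> V" by simp
      qed
    qed
    show False
    proof (cases "S = {}")
      case True
      obtain G where G: "gee l n G" "G \<noteq> {}" using assms(3) by blast
      have sg: "subgee l n G" using G unfolding gee_def by auto
      then have "finite G" unfolding subgee_def using finite_subset by blast
      then have "D {} G \<in> V" using Dlem[of "{}"] G sg by auto
      moreover have "D {} G = {{}}" unfolding D_def mons_def using True by auto
      ultimately show False using key[of "{}"] by auto
    next
      case False
      then obtain j where j: "j \<in> S" by blast
      have sg: "subgee l n S" using subS True by auto
      have fS: "finite S" using Sn finite_subset by blast
      have "D (S - {j}) {j} \<in> V" using Dlem[of "S - {j}"] fS sg j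
        by (auto simp: insert_absorb)
      moreover have cj: "card (S - {j}) \<le> m" using True fS
        by (meson card_Diff1_le le_trans)
      moreover have "D (S - {j}) {j} = {S - {j}}" unfolding D_def mons_def using cj Sn by auto
      ultimately show False using key[of "S - {j}"] Sn by auto
    qed
  next
    case False
    then have cS: "card S \<ge> n - 2" using assms(2,4) by simp
    have fin1: "finite {1..n-1}" by simp
    obtain a where a: "a \<in> {1..n-1}" "{1..n-1} - {a} \<subseteq> S"
    proof (cases "S = {1..n-1}")
      case True
      then show ?thesis using that[of 1] assms(2) by auto
    next
      case False
      then obtain a where a: "a \<in> {1..n-1}" "a \<notin> S" using Sn by blast
      have "S \<subseteq> {1..n-1} - {a}" using Sn a by auto
      moreover have "card ({1..n-1} - {a}) = n - 2" using a by simp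
      ultimately have "S = {1..n-1} - {a}" using cS by (intro card_seteq) auto
      then show ?thesis using that a by auto
    qed
    define U where "U = {1..n-1} - {a}"
    have cU: "card U = n - 2" unfolding U_def using a by simp
    have fU: "finite U" unfolding U_def by simp
    have US: "U \<subseteq> S" using a U_def by simp
    have sh: "l n + l y + sum l (U - {x,y}) < l a + l x" if xy: "x \<in> U" "y \<in> U" "x \<noteq> y" for x y
    proof -
      define X where "X = U - {x}"
      have cX: "card X = m" unfolding X_def using cU xy fU assms(2,4) by simp
      have sgX: "subgee l n X" using subS[of X] US cX X_def by auto
      then have "short l n (insert n X)" unfolding subgee_def by auto
      then have sx: "sum l (insert n X) < sum l ({1..n} - insert n X)" unfolding short_def .
      have "n \<notin> X" unfolding X_def U_def using assms(2) by auto
      then have e1: "sum l (insert n X) = l n + sum l X" using fU X_def by simp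
      have "X = insert y (U - {x,y})" unfolding X_def using xy by auto
      then have e2: "sum l X = l y + sum l (U - {x,y})" using fU by simp
      have "{1..n} - insert n X = {a, x}" unfolding X_def U_def using a xy U_def assms(2) by auto
      moreover have "a \<noteq> x" using xy U_def by auto
      ultimately have e3: "sum l ({1..n} - insert n X) = l a + l x" by simp
      show ?thesis using sx e1 e2 e3 by linarith
    qed
    have "card U \<ge> 2" using cU assms(2) by simp
    then have "U \<noteq> {}" by auto
    then obtain b where b: "b \<in> U" by blast
    have "card (U - {b}) = card U - 1" using b fU by simp
    then have "card (U - {b}) \<ge> 1" using cU assms(2) by simp
    then have "U - {b} \<noteq> {}" by (metis card.empty not_one_le_zero)
    then obtain c where c: "c \<in> U - {b}" by blast
    have h1: "l n + l c + sum l (U - {b,c}) < l a + l b" using sh[of b c] b c by auto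
    have "U - {c,b} = U - {b,c}" by auto
    then have h2: "l n + l b + sum l (U - {b,c}) < l a + l c" using sh[of c b] b c by auto
    have "sum l (U - {b,c}) \<ge> 0" using pos U_def by (intro sum_nonneg) (auto intro: less_imp_le)
    moreover have "l a \<le> l n" using a lmono[of a n] by auto
    ultimately show False using h1 h2 by linarith
  qed
qed

end
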